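(* Let $G=(V,E)$ be an unweighted graph having the hypercube shell structure $HSS(D,1)$ for some $D\in\mathbb N$. Suppose every vertex of $G$ satisfies the small sphere property (SSP) and the non-clustering property (NCP). Then $G$ is isomorphic to the $D$-dimensional hypercube $H_D$.
   Context: An unweighted graph is regarded as a weighted graph with edge weights $1$ on edges, $0$ otherwise, and vertex measure $m\equiv1$; thus $\operatorname{Deg}(x)=\deg(x)$ is the number of neighbours. $d$ is the combinatorial distance, $S_k(x)=\{y:d(x,y)=k\}$, $d_-^{x_0}(z)=\#\{y\sim z:d(y,x_0)<d(z,x_0)\}$. $G$ has $HSS(D,1)$ if there is $x_0\in V$ with: (i) every vertex has degree $D$; (ii) $G$ is bipartite; (iii) $d_-^{x_0}(x)=d(x,x_0)$ for all $x\in V$. For a $D$-regular graph and a vertex $x$: (SSP) holds at $x$ if $\#S_2(x)\le\binom D2$; (NCP) holds at $x$ if, whenever $d_-^x(z)=2$ for all $z\in S_2(x)$, for every $y_1,y_2\in S_1(x)$ there is at most one $z\in S_2(x)$ with $y_1\sim z\sim y_2$. $H_D$ has vertex set the power set of $\{1,\dots,D\}$, with $A\sim B$ iff their symmetric difference has exactly one element. *)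

theory Defs
  imports Main "HOL-Library.Extended_Nat"
begin

definition simple_graph :: "'a set \<Rightarrow> ('a \<Rightarrow> 'a \<Rightarrow> bool) \<Rightarrow> bool" where
  "simple_graph V E \<longleftrightarrow> (\<forall>x y. E x y \<longrightarrow> x \<in> V \<and> y \<in> V) \<and>
     (\<forall>x y. E x y \<longrightarrow> E y x) \<and> (\<forall>x. \<not> E x x)"

definition nbrs :: "'a set \<Rightarrow> ('a \<Rightarrow> 'a \<Rightarrow> bool) \<Rightarrow> 'a \<Rightarrow> 'a set" where
  "nbrs V E x = {y \<in> V. E x y}"

definition edge_rel :: "'a set \<Rightarrow> ('a \<Rightarrow> 'a \<Rightarrow> bool) \<Rightarrow> ('a \<times> 'a) set" where
  "edge_rel V E = {(x, y). x \<in> V \<and> y \<in> V \<and> E x y}"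

text \<open>Combinatorial distance (length of a shortest walk), \<infinity> if none exists.\<close>
definition gdist :: "'a set \<Rightarrow> ('a \<Rightarrow> 'a \<Rightarrow> bool) \<Rightarrow> 'a \<Rightarrow> 'a \<Rightarrow> enat" where
  "gdist V E x y = Inf {enat n | n. (x, y) \<in> (edge_rel V E) ^^ n}"

definition sphere :: "'a set \<Rightarrow> ('a \<Rightarrow> 'a \<Rightarrow> bool) \<Rightarrow> nat \<Rightarrow> 'a \<Rightarrow> 'a set" where
  "sphere V E k x = {y \<in> V. gdist V E x y = enat k}"

definition d_minus :: "'a set \<Rightarrow> ('a \<Rightarrow> 'a \<Rightarrow> bool) \<Rightarrow> 'a \<Rightarrow> 'a \<Rightarrow> nat" where
  "d_minus V E x0 z = card {y \<in> V. E y z \<and> gdist V E y x0 < gdist V E z x0}"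

definition regular :: "'a set \<Rightarrow> ('a \<Rightarrow> 'a \<Rightarrow> bool) \<Rightarrow> nat \<Rightarrow> bool" where
  "regular V E D \<longleftrightarrow> (\<forall>x \<in> V. finite (nbrs V E x) \<and> card (nbrs V E x) = D)"

definition bipartite :: "'a set \<Rightarrow> ('a \<Rightarrow> 'a \<Rightarrow> bool) \<Rightarrow> bool" where
  "bipartite V E \<longleftrightarrow> (\<exists>A \<subseteq> V. \<forall>x \<in> V. \<forall>y \<in> V. E x y \<longrightarrow> (x \<in> A \<longleftrightarrow> y \<notin> A))"

definition HSS :: "'a set \<Rightarrow> ('a \<Rightarrow> 'a \<Rightarrow> bool) \<Rightarrow> nat \<Rightarrow> bool" where
  "HSS V E D \<longleftrightarrow> (\<exists>x0 \<in> V. regular V E D \<and> bipartite V E \<and>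
       (\<forall>x \<in> V. enat (d_minus V E x0 x) = gdist V E x x0))"

definition SSP :: "'a set \<Rightarrow> ('a \<Rightarrow> 'a \<Rightarrow> bool) \<Rightarrow> nat \<Rightarrow> 'a \<Rightarrow> bool" where
  "SSP V E D x \<longleftrightarrow> card (sphere V E 2 x) \<le> D choose 2"

definition NCP :: "'a set \<Rightarrow> ('a \<Rightarrow> 'a \<Rightarrow> bool) \<Rightarrow> 'a \<Rightarrow> bool" where
  "NCP V E x \<longleftrightarrow> ((\<forall>z \<in> sphere V E 2 x. d_minus V E x z = 2) \<longrightarrow>
     (\<forall>y1 \<in> sphere V E 1 x. \<forall>y2 \<in> sphere V E 1 x. y1 \<noteq> y2 \<longrightarrow>
        card {z \<in> sphere V E 2 x. E y1 z \<and> E z y2} \<le> 1))"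

definition hcube_V :: "nat \<Rightarrow> nat set set" where
  "hcube_V D = Pow {1..D}"

definition hcube_E :: "nat set \<Rightarrow> nat set \<Rightarrow> bool" where
  "hcube_E A B \<longleftrightarrow> card ((A - B) \<union> (B - A)) = 1"

definition graph_iso :: "'a set \<Rightarrow> ('a \<Rightarrow> 'a \<Rightarrow> bool) \<Rightarrow> 'b set \<Rightarrow> ('b \<Rightarrow> 'b \<Rightarrow> bool) \<Rightarrow> bool" where
  "graph_iso V E W F \<longleftrightarrow> (\<exists>f. bij_betw f V W \<and> (\<forall>x \<in> V. \<forall>y \<in> V. E x y \<longleftrightarrow> F (f x) (f y)))"

end

theory Submission
  imports Defs
begin


abbreviation "R V E \<equiv> edge_rel V E"

lemma gdist_enat_iff:
  "gdist V E x y = enat k \<longleftrightarrow> (x,y) \<in> (edge_rel V E)^^k \<and> (\<forall>m<k. (x,y) \<notin> (edge_rel V E)^^m)"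
proof
  let ?S = "{enat n | n. (x, y) \<in> (edge_rel V E) ^^ n}"
  assume h: "gdist V E x y = enat k"
  have ne: "?S \<noteq> {}"
  proof
    assume "?S = {}" hence "gdist V E x y = \<infinity>" unfolding gdist_def by (simp add: Inf_enat_def)
    thus False using h by simp
  qed
  have "Inf ?S \<in> ?S"
  proof -
    from ne obtain a where a: "a \<in> ?S" by blast
    have "(LEAST x. x \<in> ?S) \<in> ?S" by (rule LeastI[of "\<lambda>x. x \<in> ?S" a]) (rule a)
    thus ?thesis using ne unfolding Inf_enat_def by simp
  qed
  hence k: "(x,y) \<in> (edge_rel V E)^^k" using h unfolding gdist_def by auto
  have "\<forall>m<k. (x,y) \<notin> (edge_rel V E)^^m"
  proof (intro allI impI notI)
    fix m assume "m < k" "(x,y) \<in> (edge_rel V E)^^m"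
    hence "Inf ?S \<le> enat m" by (intro Inf_lower) auto
    thus False using h \<open>m<k\<close> unfolding gdist_def by simp
  qed
  with k show "(x,y) \<in> (edge_rel V E)^^k \<and> (\<forall>m<k. (x,y) \<notin> (edge_rel V E)^^m)" by blast
next
  let ?S = "{enat n | n. (x, y) \<in> (edge_rel V E) ^^ n}"
  assume h: "(x,y) \<in> (edge_rel V E)^^k \<and> (\<forall>m<k. (x,y) \<notin> (edge_rel V E)^^m)"
  have "Inf ?S \<le> enat k" using h by (intro Inf_lower) auto
  moreover have "enat k \<le> Inf ?S"
  proof (rule Inf_greatest)
    fix b assume "b \<in> ?S"
    then obtain n where "b = enat n" "(x,y) \<in> (edge_rel V E)^^n" by auto
    thus "enat k \<le> b" using h by (metis enat_ord_simps(1) not_le)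
  qed
  ultimately show "gdist V E x y = enat k" unfolding gdist_def by simp
qed

lemma gdist_le: "(x,y) \<in> (edge_rel V E)^^n \<Longrightarrow> gdist V E x y \<le> enat n"
  unfolding gdist_def by (rule Inf_lower) auto

lemma gdist_0: "gdist V E x y = enat 0 \<longleftrightarrow> x = y"
  by (simp add: gdist_enat_iff)

lemma edge_rel_iff: "simple_graph V E \<Longrightarrow> (x,y) \<in> edge_rel V E \<longleftrightarrow> E x y"
  unfolding simple_graph_def edge_rel_def by auto

lemma gdist_1: "simple_graph V E \<Longrightarrow> gdist V E x y = enat 1 \<longleftrightarrow> E x y"
  unfolding gdist_enat_iff using edge_rel_iff[of V E x y]
  by (auto simp: simple_graph_def)

lemma gdist_2: assumes sg: "simple_graph V E"
  shows "gdist V E x y = enat 2 \<longleftrightarrow> x \<noteq> y \<and> \<not> E x y \<and> (\<exists>z. E x z \<and> E z y)"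
proof
  assume "gdist V E x y = enat 2"
  hence h: "(x,y) \<in> (edge_rel V E)^^(Suc (Suc 0))" "(x,y) \<notin> (edge_rel V E)^^0" "(x,y) \<notin> (edge_rel V E)^^1"
    unfolding gdist_enat_iff numeral_2_eq_2 by auto
  from h(1) obtain z where z: "(x,z) \<in> edge_rel V E" "(z,y) \<in> (edge_rel V E)^^(Suc 0)"
    using relpow_Suc_D2 by metis
  have "(z,y) \<in> edge_rel V E" using z(2) by simp
  thus "x \<noteq> y \<and> \<not> E x y \<and> (\<exists>z. E x z \<and> E z y)"
    using h(2,3) z(1) edge_rel_iff[OF sg] by auto
next
  assume h: "x \<noteq> y \<and> \<not> E x y \<and> (\<exists>z. E x z \<and> E z y)"
  then obtain z where z: "E x z" "E z y" by blast
  have "(x,y) \<in> (edge_rel V E)^^(Suc (Suc 0))"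
    apply (rule relpow_Suc_I2[of x z])
    using z edge_rel_iff[OF sg] by auto
  moreover have "\<forall>m<Suc (Suc 0). (x,y) \<notin> (edge_rel V E)^^m"
  proof (intro allI impI)
    fix m :: nat assume "m < Suc (Suc 0)"
    hence "m = 0 \<or> m = 1" by auto
    thus "(x,y) \<notin> (edge_rel V E)^^m" using h edge_rel_iff[OF sg] by auto
  qed
  ultimately show "gdist V E x y = enat 2" unfolding gdist_enat_iff numeral_2_eq_2 by blast
qed

lemma relpow_sym: assumes "simple_graph V E" "(x,y) \<in> (edge_rel V E)^^n"
  shows "(y,x) \<in> (edge_rel V E)^^n"
  using assms(2)
proof (induction n arbitrary: y)
  case 0 then show ?case by simp
next
  case (Suc n)
  then obtain z where "(x,z) \<in> (edge_rel V E)^^n" "(z,y) \<in> edge_rel V E" by (auto elim: relpow_Suc_E)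
  moreover have "(y,z) \<in> edge_rel V E" using calculation(2) assms(1) edge_rel_iff[of V E]
    by (auto simp: simple_graph_def)
  ultimately show ?case using Suc.IH relpow_Suc_I2 by metis
qed

lemma gdist_sym: assumes "simple_graph V E" shows "gdist V E x y = gdist V E y x"
proof -
  have "{enat n |n. (x,y) \<in> (edge_rel V E)^^n} = {enat n |n. (y,x) \<in> (edge_rel V E)^^n}"
    using relpow_sym[OF assms, of x y] relpow_sym[OF assms, of y x] by blast
  thus ?thesis unfolding gdist_def by simp
qed

lemma gdist_lt2: assumes "simple_graph V E" shows "gdist V E x y < enat 2 \<longleftrightarrow> x = y \<or> E x y"
proof -
  have "gdist V E x y < enat 2 \<longleftrightarrow> gdist V E x y = enat 0 \<or> gdist V E x y = enat 1"
  proof (cases "gdist V E x y")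
    case (enat n)
    have "n < 2 \<longleftrightarrow> n = 0 \<or> n = 1" by linarith
    thus ?thesis using enat by simp
  next
    case infinity thus ?thesis by simp
  qed
  thus ?thesis unfolding gdist_0 gdist_1[OF assms] .
qed

definition sd :: "'b set \<Rightarrow> 'b set \<Rightarrow> 'b set" where "sd A B = (A - B) \<union> (B - A)"


lemma sum_card_swap:
  assumes "finite A" "finite B"
  shows "(\<Sum>a\<in>A. card {b\<in>B. P a b}) = (\<Sum>b\<in>B. card {a\<in>A. P a b})"
proof -
  have c: "\<And>a. card {b\<in>B. P a b} = (\<Sum>b\<in>B. if P a b then 1 else 0)"
  proof -
    fix a have "B \<inter> Collect (P a) = {b\<in>B. P a b}" by auto
    thus "card {b\<in>B. P a b} = (\<Sum>b\<in>B. if P a b then 1 else 0)" using assms by (simp add: sum.If_cases)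
  qed
  have c2: "\<And>b. card {a\<in>A. P a b} = (\<Sum>a\<in>A. if P a b then 1 else 0)"
  proof -
    fix b have "A \<inter> {a. P a b} = {a\<in>A. P a b}" by auto
    thus "card {a\<in>A. P a b} = (\<Sum>a\<in>A. if P a b then 1 else 0)" using assms by (simp add: sum.If_cases)
  qed
  have "(\<Sum>a\<in>A. card {b\<in>B. P a b}) = (\<Sum>a\<in>A. \<Sum>b\<in>B. if P a b then 1 else 0)"
    by (simp add: c)
  also have "\<dots> = (\<Sum>b\<in>B. \<Sum>a\<in>A. if P a b then 1 else 0)" by (rule sum.swap)
  also have "\<dots> = (\<Sum>b\<in>B. card {a\<in>A. P a b})"
    by (simp add: c2)
  finally show ?thesis .
qed

lemma sum_eq_bound:
  fixes g :: "'b \<Rightarrow> nat"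
  assumes "finite A" "\<forall>a\<in>A. m \<le> g a" "(\<Sum>a\<in>A. g a) \<le> card A * m"
  shows "\<forall>a\<in>A. g a = m"
proof (rule ccontr)
  assume "\<not> (\<forall>a\<in>A. g a = m)"
  then obtain a where a: "a \<in> A" "m < g a" using assms(2) by (auto simp: le_less)
  have "(\<Sum>a\<in>A. m) < (\<Sum>a\<in>A. g a)"
    by (rule sum_strict_mono_ex1) (use assms a in auto)
  thus False using assms(3) by (simp add: mult.commute)
qed

lemma sum_eq_bound_le:
  fixes g :: "'b \<Rightarrow> nat"
  assumes "finite A" "\<forall>a\<in>A. g a \<le> m" "card A * m \<le> (\<Sum>a\<in>A. g a)"
  shows "\<forall>a\<in>A. g a = m"
proof (rule ccontr)
  assume "\<not> (\<forall>a\<in>A. g a = m)"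
  then obtain a where a: "a \<in> A" "g a < m" using assms(2) by (auto simp: le_less)
  have "(\<Sum>a\<in>A. g a) < (\<Sum>a\<in>A. m)"
    by (rule sum_strict_mono_ex1) (use assms a in auto)
  thus False using assms(3) by (simp add: mult.commute)
qed


lemma binom_step: "(D choose j) * (D - j) = (D choose Suc j) * Suc j"
proof (cases D)
  case 0 thus ?thesis by simp
next
  case (Suc n)
  have 1: "(D - j) * (D choose j) = D * (n choose j)" using binomial_absorb_comp[of D j] Suc by simp
  have 2: "Suc j * (D choose Suc j) = D * (n choose j)" using Suc_times_binomial[of j n] Suc by simp
  show ?thesis using 1 2 by (metis mult.commute)
qed

lemma card_offdiag:
  assumes "finite C"
  shows "card {p \<in> C \<times> C. fst p \<noteq> snd p} = card C * (card C - 1)"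
proof -
  let ?O = "{p \<in> C \<times> C. fst p \<noteq> snd p}" and ?G = "(\<lambda>x. (x,x)) ` C"
  have u: "C \<times> C = ?O \<union> ?G"
  proof -
    have h: "(a,b) \<in> C \<times> C \<longleftrightarrow> (a,b) \<in> ?O \<union> ?G" for a b by (cases "a = b") auto
    show ?thesis
    proof (rule set_eqI)
      fix x show "x \<in> C \<times> C \<longleftrightarrow> x \<in> ?O \<union> ?G" using h[of "fst x" "snd x"] by simp
    qed
  qed
  have dj: "?O \<inter> ?G = {}" by force
  have f1: "finite ?O" using assms by simp
  have f2: "finite ?G" using assms by simp
  have cG: "card ?G = card C" by (rule card_image) (auto simp: inj_on_def)
  have "card (C \<times> C) = card (?O \<union> ?G)" by (rule arg_cong[OF u])
  also have "\<dots> = card ?O + card ?G" by (rule card_Un_disjoint[OF f1 f2 dj])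
  also have "\<dots> = card ?O + card C" by (simp only: cG)
  finally have eq: "card (C \<times> C) = card ?O + card C" .
  have "card C * card C = card ?O + card C" using eq card_cartesian_product[of C C] by linarith
  moreover have "card C * (card C - 1) = card C * card C - card C" by (simp add: diff_mult_distrib2)
  ultimately show ?thesis by linarith
qed

lemma cc_ineq: "2 * (c::nat) \<le> c * (c - 1) + 2"
proof (cases "c \<le> 2")
  case True hence "c = 0 \<or> c = 1 \<or> c = 2" by auto
  thus ?thesis by auto
next
  case False
  hence "2 \<le> c - 1" by simp
  hence "c * 2 \<le> c * (c - 1)" by (rule mult_le_mono2)
  thus ?thesis by linarith
qed

lemma cc_ineq_eq: "2 * (c::nat) = c * (c - 1) + 2 \<Longrightarrow> c \<le> 2"
proof (rule ccontr)
  assume h: "2 * c = c * (c - 1) + 2" "\<not> c \<le> 2"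
  hence "3 \<le> c - 1 + 1" by simp
  hence "2 \<le> c - 1" by simp
  hence "c * 2 \<le> c * (c - 1)" by (rule mult_le_mono2)
  thus False using h(1) by linarith
qed

lemma sum_eq_ge:
  fixes g h :: "'b \<Rightarrow> nat"
  assumes "finite A" "\<forall>a\<in>A. h a \<le> g a" "(\<Sum>a\<in>A. g a) \<le> (\<Sum>a\<in>A. h a)"
  shows "\<forall>a\<in>A. g a = h a"
proof (rule ccontr)
  assume "\<not> (\<forall>a\<in>A. g a = h a)"
  then obtain a where a: "a \<in> A" "h a < g a" using assms(2) by (auto simp: le_less)
  have "(\<Sum>a\<in>A. h a) < (\<Sum>a\<in>A. g a)"
    by (rule sum_strict_mono_ex1) (use assms a in auto)
  thus False using assms(3) by simp
qed

locale hg =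
  fixes V :: "'a set" and E :: "'a \<Rightarrow> 'a \<Rightarrow> bool" and D :: nat and x0 :: 'a
  assumes sg: "simple_graph V E" and x0V: "x0 \<in> V" and reg: "regular V E D"
    and bip: "bipartite V E"
    and hss: "\<forall>x\<in>V. enat (d_minus V E x0 x) = gdist V E x x0"
    and ssp: "\<forall>x\<in>V. SSP V E D x" and ncp: "\<forall>x\<in>V. NCP V E x"
begin

definition L where "L x = d_minus V E x0 x"

lemma Esym: "E x y \<Longrightarrow> E y x" using sg unfolding simple_graph_def by blast
lemma EV: "E x y \<Longrightarrow> x \<in> V" "E x y \<Longrightarrow> y \<in> V" using sg unfolding simple_graph_def by blast+
lemma Eirr: "\<not> E x x" using sg unfolding simple_graph_def by blast
lemma R_iff: "(x,y) \<in> edge_rel V E \<longleftrightarrow> E x y" using edge_rel_iff[OF sg] .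

lemma L_gdist: "x \<in> V \<Longrightarrow> gdist V E x x0 = enat (L x)"
  using hss unfolding L_def by simp

lemma L_path: "x \<in> V \<Longrightarrow> (x,x0) \<in> (edge_rel V E)^^(L x)"
  using L_gdist gdist_enat_iff by metis

lemma L_min: "x \<in> V \<Longrightarrow> (x,x0) \<in> (edge_rel V E)^^n \<Longrightarrow> L x \<le> n"
proof -
  assume a: "x \<in> V" "(x,x0) \<in> (edge_rel V E)^^n"
  have "gdist V E x x0 \<le> enat n" using gdist_le[OF a(2)] .
  thus ?thesis using L_gdist[OF a(1)] by simp
qed

lemma L_x0: "L x0 = 0"
  using L_min[OF x0V, of 0] by simp

lemma L0: "x \<in> V \<Longrightarrow> L x = 0 \<Longrightarrow> x = x0"
  using L_path[of x] by simp

lemma L_step: "E x y \<Longrightarrow> L y \<le> Suc (L x)"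
proof -
  assume e: "E x y"
  have "(y,x0) \<in> (edge_rel V E)^^(Suc (L x))"
    using relpow_Suc_I2[of y x "edge_rel V E" x0 "L x"] L_path[OF EV(1)[OF e]] R_iff Esym[OF e] by blast
  thus ?thesis using L_min EV(2)[OF e] by blast
qed

lemma parity:
  assumes A: "\<forall>x\<in>V. \<forall>y\<in>V. E x y \<longrightarrow> (x \<in> A \<longleftrightarrow> y \<notin> A)"
  shows "(x,y) \<in> (edge_rel V E)^^n \<Longrightarrow> ((x \<in> A \<longleftrightarrow> y \<in> A) \<longleftrightarrow> even n)"
proof (induction n arbitrary: y)
  case 0 then show ?case by simp
next
  case (Suc n)
  then obtain z where z: "(x,z) \<in> (edge_rel V E)^^n" "E z y" using R_iff by (auto elim: relpow_Suc_E)
  have "(z \<in> A \<longleftrightarrow> y \<notin> A)" using A z(2) EV[OF z(2)] by blast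
  thus ?case using Suc.IH[OF z(1)] by auto
qed

lemma L_ne: "E x y \<Longrightarrow> L x \<noteq> L y"
proof
  assume e: "E x y" and eq: "L x = L y"
  obtain A where A: "\<forall>x\<in>V. \<forall>y\<in>V. E x y \<longrightarrow> (x \<in> A \<longleftrightarrow> y \<notin> A)"
    using bip unfolding bipartite_def by blast
  have 1: "(x \<in> A \<longleftrightarrow> x0 \<in> A) \<longleftrightarrow> even (L x)" using parity[OF A L_path[OF EV(1)[OF e]]] .
  have 2: "(y \<in> A \<longleftrightarrow> x0 \<in> A) \<longleftrightarrow> even (L y)" using parity[OF A L_path[OF EV(2)[OF e]]] .
  have "(x \<in> A \<longleftrightarrow> y \<notin> A)" using A e EV[OF e] by blast
  thus False using 1 2 eq by auto
qed

lemma L_adj: "E x y \<Longrightarrow> L y = Suc (L x) \<or> L x = Suc (L y)"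
  using L_step[of x y] L_step[of y x] L_ne[of x y] Esym[of x y] by linarith

definition down where "down x = {y\<in>V. E y x \<and> L y < L x}"
definition up where "up x = {y\<in>V. E x y \<and> L x < L y}"

lemma fin_nbrs: "x \<in> V \<Longrightarrow> finite (nbrs V E x)" and card_nbrs: "x \<in> V \<Longrightarrow> card (nbrs V E x) = D"
  using reg unfolding regular_def by auto

lemma card_down: "x \<in> V \<Longrightarrow> card (down x) = L x"
proof -
  assume x: "x \<in> V"
  have "{y\<in>V. E y x \<and> gdist V E y x0 < gdist V E x x0} = down x"
    unfolding down_def using L_gdist x by auto
  thus ?thesis using x unfolding L_def d_minus_def by metis
qed

lemma nbrs_split: "nbrs V E x = down x \<union> up x" "down x \<inter> up x = {}"
  unfolding nbrs_def down_def up_def using L_ne Esym by fastforce+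

lemma fin_down: "x \<in> V \<Longrightarrow> finite (down x)" and fin_up: "x \<in> V \<Longrightarrow> finite (up x)"
  using fin_nbrs nbrs_split by (metis finite_Un)+

lemma card_up: "x \<in> V \<Longrightarrow> card (up x) = D - L x" and L_le_D: "x \<in> V \<Longrightarrow> L x \<le> D"
proof -
  assume x: "x \<in> V"
  have "card (nbrs V E x) = card (down x) + card (up x)"
    using nbrs_split fin_down[OF x] fin_up[OF x] by (simp add: card_Un_disjoint)
  thus "card (up x) = D - L x" "L x \<le> D" using card_nbrs[OF x] card_down[OF x] by auto
qed

definition N2 where "N2 v = {u\<in>V. u \<noteq> v \<and> (\<exists>y. E v y \<and> E y u)}"
definition cc where "cc v u = card {y\<in>V. E v y \<and> E y u}"

lemma N2_L: "u \<in> N2 v \<Longrightarrow> L u = L v + 2 \<or> L u = L v \<or> L v = L u + 2"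
proof -
  assume "u \<in> N2 v"
  then obtain y where "E v y" "E y u" unfolding N2_def by blast
  thus ?thesis using L_adj[of v y] L_adj[of y u] by auto
qed

lemma N2_notE: "u \<in> N2 v \<Longrightarrow> \<not> E v u"
  using N2_L L_adj by fastforce

lemma sphere2: "sphere V E 2 v = N2 v"
proof -
  have "\<And>u. u \<in> V \<Longrightarrow> gdist V E v u = enat 2 \<longleftrightarrow> u \<in> N2 v"
    using gdist_2[OF sg] N2_notE unfolding N2_def by blast
  thus ?thesis unfolding sphere_def N2_def by auto
qed

lemma sphere1: "sphere V E 1 v = nbrs V E v"
  unfolding sphere_def nbrs_def using gdist_1[OF sg] by auto

lemma dminus_cc: "u \<in> N2 v \<Longrightarrow> d_minus V E v u = cc v u"
proof -
  assume u: "u \<in> N2 v"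
  have g: "gdist V E u v = enat 2" using u gdist_sym[OF sg, of u v] sphere2 unfolding sphere_def by auto
  have "{y \<in> V. E y u \<and> gdist V E y v < gdist V E u v} = {y\<in>V. E v y \<and> E y u}"
  proof -
    have "\<And>y. gdist V E y v < enat 2 \<longleftrightarrow> y = v \<or> E y v" using gdist_lt2[OF sg] by blast
    thus ?thesis using g N2_notE[OF u] Esym by auto
  qed
  thus ?thesis unfolding d_minus_def cc_def by simp
qed

lemma N2_sub: "v \<in> V \<Longrightarrow> N2 v \<subseteq> (\<Union>y\<in>nbrs V E v. nbrs V E y)"
  unfolding N2_def nbrs_def using EV by blast

lemma fin_N2: "v \<in> V \<Longrightarrow> finite (N2 v)"
proof -
  assume v: "v \<in> V"
  have "finite (\<Union>y\<in>nbrs V E v. nbrs V E y)"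
    using fin_nbrs[OF v] fin_nbrs unfolding nbrs_def by auto
  thus ?thesis using N2_sub[OF v] finite_subset by blast
qed

lemma sum_cc: "v \<in> V \<Longrightarrow> (\<Sum>u\<in>N2 v. cc v u) = D * (D - 1)"
proof -
  assume v: "v \<in> V"
  have "(\<Sum>u\<in>N2 v. cc v u) = (\<Sum>u\<in>N2 v. card {y\<in>nbrs V E v. E y u})"
    unfolding cc_def nbrs_def by (rule sum.cong) auto
  also have "\<dots> = (\<Sum>y\<in>nbrs V E v. card {u\<in>N2 v. E y u})"
    by (rule sum_card_swap[OF fin_N2[OF v] fin_nbrs[OF v]])
  also have "\<dots> = (\<Sum>y\<in>nbrs V E v. D - 1)"
  proof (rule sum.cong)
    fix y assume y: "y \<in> nbrs V E v"
    have "{u\<in>N2 v. E y u} = nbrs V E y - {v}"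
      using y unfolding N2_def nbrs_def using EV by auto
    moreover have "v \<in> nbrs V E y" using y Esym v unfolding nbrs_def by auto
    moreover have "y \<in> V" using y unfolding nbrs_def by auto
    ultimately show "card {u\<in>N2 v. E y u} = D - 1" using card_nbrs fin_nbrs by simp
  qed simp
  also have "\<dots> = D * (D - 1)" using card_nbrs[OF v] by simp
  finally show ?thesis .
qed

lemma all2: assumes v: "v \<in> V" and le: "\<forall>u\<in>N2 v. cc v u \<le> 2"
  shows "\<forall>u\<in>N2 v. cc v u = 2"
proof (rule sum_eq_bound_le[OF fin_N2[OF v] le])
  have "card (N2 v) \<le> D choose 2" using ssp v sphere2 unfolding SSP_def by auto
  hence h: "card (N2 v) \<le> D * (D - 1) div 2" unfolding choose_two .
  have "2 * card (N2 v) \<le> 2 * (D * (D - 1) div 2)" using h by simp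
  also have "\<dots> \<le> D * (D - 1)" by (rule times_div_less_eq_dividend)
  finally have "2 * card (N2 v) \<le> D * (D - 1)" .
  thus "card (N2 v) * 2 \<le> (\<Sum>u\<in>N2 v. cc v u)" using sum_cc[OF v] by simp
qed

lemma ncp': assumes v: "v \<in> V" and le: "\<forall>u\<in>N2 v. cc v u \<le> 2"
  and y: "E v y1" "E v y2" "y1 \<noteq> y2"
  shows "card {u\<in>N2 v. E y1 u \<and> E u y2} \<le> 1"
proof -
  have "\<forall>z\<in>sphere V E 2 v. d_minus V E v z = 2"
    using all2[OF v le] dminus_cc sphere2 by simp
  moreover have "y1 \<in> sphere V E 1 v" "y2 \<in> sphere V E 1 v"
    using y EV unfolding sphere1 nbrs_def by auto
  ultimately have "card {z \<in> sphere V E 2 v. E y1 z \<and> E z y2} \<le> 1"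
    using ncp v y(3) unfolding NCP_def by blast
  thus ?thesis unfolding sphere2 .
qed

end

lemma sd_card1:
  assumes "finite A" "finite B"
  shows "card (sd A B) = 1 \<longleftrightarrow> (A \<subseteq> B \<and> card B = Suc (card A)) \<or> (B \<subseteq> A \<and> card A = Suc (card B))"
proof -
  have d: "card (sd A B) = card (A - B) + card (B - A)"
    unfolding sd_def using assms by (subst card_Un_disjoint) auto
  have a: "card A = card (A \<inter> B) + card (A - B)" using card_Int_Diff[OF assms(1)] .
  have b: "card B = card (B \<inter> A) + card (B - A)" using card_Int_Diff[OF assms(2)] .
  have ba: "B \<inter> A = A \<inter> B" by (rule Int_commute)
  have ab1: "card (A - B) = 0 \<longleftrightarrow> A \<subseteq> B" using assms by simp
  have ab2: "card (B - A) = 0 \<longleftrightarrow> B \<subseteq> A" using assms by simp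
  have "card (sd A B) = 1 \<longleftrightarrow> (card (A - B) = 0 \<and> card B = Suc (card A)) \<or> (card (B - A) = 0 \<and> card A = Suc (card B))"
  proof -
    have key: "\<And>p q c::nat. (p + q = 1) = ((p = 0 \<and> c + q = Suc (c + p)) \<or> (q = 0 \<and> c + p = Suc (c + q)))"
    proof -
      fix p q c :: nat
      show "(p + q = 1) = ((p = 0 \<and> c + q = Suc (c + p)) \<or> (q = 0 \<and> c + p = Suc (c + q)))"
        by (cases p; cases q) auto
    qed
    show ?thesis unfolding d using key[of "card (A - B)" "card (B - A)" "card (A \<inter> B)"]
      unfolding a[symmetric] b[unfolded ba, symmetric] .
  qed
  thus ?thesis unfolding ab1 ab2 .
qed

lemma sd_two:
  assumes "card (sd X Z) = 1" "card (sd Z Y) = 1" "X \<noteq> Y"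
  shows "Z \<in> (\<lambda>a. sd X {a}) ` (sd X Y)" "finite (sd X Y)" "card (sd X Y) \<le> 2"
proof -
  obtain a where a: "sd X Z = {a}" using assms(1) card_1_singletonE by blast
  obtain b where b: "sd Z Y = {b}" using assms(2) card_1_singletonE by blast
  have Z: "Z = sd X {a}" using a unfolding sd_def by blast
  have XY: "sd X Y = sd {a} {b}" using a b unfolding sd_def by blast
  have "a \<noteq> b"
  proof
    assume "a = b" hence "sd X Y = {}" using XY unfolding sd_def by auto
    thus False using assms(3) unfolding sd_def by auto
  qed
  hence XY2: "sd X Y = {a, b}" using XY unfolding sd_def by auto
  show "Z \<in> (\<lambda>a. sd X {a}) ` (sd X Y)" using Z XY2 by auto
  show "finite (sd X Y)" using XY2 by simp
  show "card (sd X Y) \<le> 2" using XY2 by (simp add: card_insert_if)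
qed

locale hg2 = hg +
  fixes e :: "nat \<Rightarrow> 'a"
  assumes e_bij: "bij_betw e {1..D} (nbrs V E x0)"
begin

definition Dn where "Dn = {(x,y). x \<in> V \<and> y \<in> V \<and> E x y \<and> L y < L x}"
definition f where "f x = {i\<in>{1..D}. (x, e i) \<in> Dn\<^sup>*}"
definition S where "S j = {x\<in>V. L x = j}"
definition tgt :: "nat \<Rightarrow> nat set set" where "tgt j = {A. A \<subseteq> {1..D} \<and> card A = j}"
definition H where "H k \<longleftrightarrow> (\<forall>j\<le>k. bij_betw f (S j) (tgt j)) \<and>
   (\<forall>z\<in>V. \<forall>w\<in>V. Suc (L z) = L w \<longrightarrow> L w \<le> k \<longrightarrow> (E z w \<longleftrightarrow> f z \<subseteq> f w))"

lemma e_nbr: "i \<in> {1..D} \<Longrightarrow> E x0 (e i) \<and> e i \<in> V \<and> L (e i) = 1"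
proof -
  assume i: "i \<in> {1..D}"
  hence "e i \<in> nbrs V E x0" using e_bij bij_betwE by blast
  hence E: "E x0 (e i)" "e i \<in> V" unfolding nbrs_def by auto
  thus ?thesis using L_adj[OF E(1)] L_x0 by auto
qed

lemma L1_iff: "x \<in> V \<Longrightarrow> L x = 1 \<longleftrightarrow> E x0 x"
proof
  assume x: "x \<in> V" and l: "L x = 1"
  hence "card (down x) = 1" using card_down by simp
  then obtain z where "z \<in> down x" by (metis card_1_singletonE insertI1)
  hence "E z x" "L z = 0" "z \<in> V" unfolding down_def using l by auto
  thus "E x0 x" using L0 by auto
next
  assume "E x0 x" thus "L x = 1" using L_adj[of x0 x] L_x0 by auto
qed

lemma f_sub: "f x \<subseteq> {1..D}" unfolding f_def by auto

lemma no_x0: "i \<in> {1..D} \<Longrightarrow> (x0, e i) \<notin> Dn\<^sup>*"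
proof
  assume i: "i \<in> {1..D}" and p: "(x0, e i) \<in> Dn\<^sup>*"
  show False using p
  proof (cases rule: converse_rtranclE)
    case base thus False using e_nbr[OF i] L_x0 by simp
  next
    case (step z) thus False using L_x0 unfolding Dn_def by auto
  qed
qed

lemma f_x0: "f x0 = {}" unfolding f_def using no_x0 by auto

lemma f_1: assumes x: "x \<in> V" "L x = 1" shows "f x = {i\<in>{1..D}. x = e i}"
proof -
  have "\<And>i. i \<in> {1..D} \<Longrightarrow> (x, e i) \<in> Dn\<^sup>* \<longleftrightarrow> x = e i"
  proof
    fix i assume i: "i \<in> {1..D}" and p: "(x, e i) \<in> Dn\<^sup>*"
    show "x = e i" using p
    proof (cases rule: converse_rtranclE)
      case base thus ?thesis by simp
    next
      case (step z)
      hence "z \<in> V" "L z = 0" using x unfolding Dn_def by auto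
      hence "z = x0" using L0 by blast
      thus ?thesis using step no_x0[OF i] by simp
    qed
  qed simp
  thus ?thesis unfolding f_def by auto
qed

lemma f_U: assumes x: "x \<in> V" "2 \<le> L x" shows "f x = \<Union> (f ` down x)"
proof -
  have "\<And>i. i \<in> {1..D} \<Longrightarrow> (x, e i) \<in> Dn\<^sup>* \<longleftrightarrow> (\<exists>z\<in>down x. (z, e i) \<in> Dn\<^sup>*)"
  proof
    fix i assume i: "i \<in> {1..D}" and p: "(x, e i) \<in> Dn\<^sup>*"
    show "\<exists>z\<in>down x. (z, e i) \<in> Dn\<^sup>*" using p
    proof (cases rule: converse_rtranclE)
      case base thus ?thesis using e_nbr[OF i] x by simp
    next
      case (step z)
      hence "z \<in> down x" unfolding Dn_def down_def using Esym by auto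
      thus ?thesis using step by blast
    qed
  next
    fix i assume "\<exists>z\<in>down x. (z, e i) \<in> Dn\<^sup>*"
    then obtain z where z: "z \<in> down x" "(z, e i) \<in> Dn\<^sup>*" by blast
    have "(x, z) \<in> Dn" using z(1) x unfolding down_def Dn_def using Esym by auto
    thus "(x, e i) \<in> Dn\<^sup>*" using z(2) by (rule converse_rtrancl_into_rtrancl)
  qed
  thus ?thesis unfolding f_def by auto
qed

lemma f_mono: assumes x: "x \<in> V" and z: "z \<in> down x" shows "f z \<subseteq> f x"
proof
  fix i assume "i \<in> f z"
  hence i: "i \<in> {1..D}" "(z, e i) \<in> Dn\<^sup>*" unfolding f_def by auto
  have "(x, z) \<in> Dn" using z x unfolding down_def Dn_def using Esym by auto
  thus "i \<in> f x" using i converse_rtrancl_into_rtrancl unfolding f_def by fastforce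
qed

lemma S0: "S 0 = {x0}"
proof -
  have h: "\<And>x. (x \<in> V \<and> L x = 0) \<longleftrightarrow> x = x0" using L0 L_x0 x0V by blast
  show ?thesis
  proof (rule set_eqI)
    fix x show "x \<in> S 0 \<longleftrightarrow> x \<in> {x0}"
      unfolding S_def mem_Collect_eq singleton_iff by (rule h)
  qed
qed

lemma t0: "tgt 0 = {{}}"
proof -
  have "\<And>A. (A \<subseteq> {1..D} \<and> card A = 0) \<longleftrightarrow> A = {}"
  proof
    fix A assume "A \<subseteq> {1..D} \<and> card A = 0"
    thus "A = {}" using finite_subset[of A "{1..D}"] by simp
  qed simp
  note h = this
  show ?thesis
  proof (rule set_eqI)
    fix A show "A \<in> tgt 0 \<longleftrightarrow> A \<in> {{}}"
      unfolding tgt_def mem_Collect_eq singleton_iff by (rule h)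
  qed
qed

lemma b0: "bij_betw f (S 0) (tgt 0)"
  unfolding S0 t0 f_x0[symmetric] by (rule bij_betw_singletonI, rule refl)

lemma H0: "H 0"
  unfolding H_def using b0 by auto

lemma H1: "H 1"
proof -
  have S1: "S 1 = e ` {1..D}"
  proof -
    have "e ` {1..D} = nbrs V E x0" using e_bij by (simp add: bij_betw_def)
    thus ?thesis using L1_iff unfolding S_def nbrs_def by auto
  qed
  have fe: "\<And>i. i \<in> {1..D} \<Longrightarrow> f (e i) = {i}"
  proof -
    fix i assume i: "i \<in> {1..D}"
    have "f (e i) = {j\<in>{1..D}. e i = e j}" using f_1 e_nbr[OF i] by blast
    also have "\<dots> = {i}"
    proof -
      have "inj_on e {1..D}" using e_bij by (simp add: bij_betw_def)
      thus ?thesis using i unfolding inj_on_def by blast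
    qed
    finally show "f (e i) = {i}" .
  qed
  have b1: "bij_betw f (S 1) (tgt 1)"
  proof (rule bij_betw_imageI)
    show "inj_on f (S 1)" unfolding S1 inj_on_def using fe by auto
    show "f ` S 1 = tgt 1"
    proof
      show "f ` S 1 \<subseteq> tgt 1" unfolding S1 tgt_def using fe by auto
      show "tgt 1 \<subseteq> f ` S 1"
      proof
        fix A assume "A \<in> tgt 1"
        hence "card A = 1" "A \<subseteq> {1..D}" unfolding tgt_def by auto
        then obtain i where "A = {i}" "i \<in> {1..D}" by (metis card_1_singletonE insert_subset)
        thus "A \<in> f ` S 1" unfolding S1 using fe by (metis image_eqI)
      qed
    qed
  qed
  have "\<forall>j\<le>1. bij_betw f (S j) (tgt j)"
  proof (intro allI impI)
    fix j :: nat assume "j \<le> 1" hence "j = 0 \<or> j = 1" by auto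
    thus "bij_betw f (S j) (tgt j)" using b0 b1 by auto
  qed
  moreover have "\<forall>z\<in>V. \<forall>w\<in>V. Suc (L z) = L w \<longrightarrow> L w \<le> 1 \<longrightarrow> (E z w \<longleftrightarrow> f z \<subseteq> f w)"
  proof (intro ballI impI)
    fix z w assume z: "z \<in> V" and w: "w \<in> V" and l: "Suc (L z) = L w" "L w \<le> 1"
    hence "z = x0" "L w = 1" using L0 by auto
    thus "E z w \<longleftrightarrow> f z \<subseteq> f w" using L1_iff w f_x0 by auto
  qed
  ultimately show ?thesis unfolding H_def by blast
qed

lemma down_L: "z \<in> down w \<Longrightarrow> Suc (L z) = L w \<and> z \<in> V \<and> E z w"
  unfolding down_def using L_adj by fastforce

lemma up_L: "z \<in> up w \<Longrightarrow> L z = Suc (L w) \<and> z \<in> V \<and> E w z"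
  unfolding up_def using L_adj by fastforce

lemma fin_f: "finite (f x)" using f_sub finite_subset by blast

lemma fin_tgt: "finite (tgt j)" unfolding tgt_def by simp
lemma card_tgt: "card (tgt j) = D choose j" unfolding tgt_def using n_subsets[of "{1..D}" j] by simp

lemma Hk_bij: "H k \<Longrightarrow> j \<le> k \<Longrightarrow> bij_betw f (S j) (tgt j)" unfolding H_def by blast

lemma Hk_adjc: "H k \<Longrightarrow> z \<in> V \<Longrightarrow> w \<in> V \<Longrightarrow> Suc (L z) = L w \<Longrightarrow> L w \<le> k \<Longrightarrow> (E z w \<longleftrightarrow> f z \<subseteq> f w)"
  unfolding H_def by blast

lemma Hk_card: assumes "H k" "x \<in> V" "L x \<le> k" shows "card (f x) = L x"
proof -
  have "x \<in> S (L x)" unfolding S_def using assms by simp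
  hence "f x \<in> tgt (L x)" using Hk_bij[OF assms(1,3)] bij_betwE by blast
  thus ?thesis unfolding tgt_def by simp
qed

lemma Hk_inj: assumes "H k" "x \<in> V" "y \<in> V" "L x \<le> k" "L y \<le> k" "f x = f y" shows "x = y"
proof -
  have l: "L x = L y" using Hk_card[OF assms(1,2,4)] Hk_card[OF assms(1,3,5)] assms(6) by simp
  have "x \<in> S (L x)" "y \<in> S (L x)" unfolding S_def using assms l by auto
  moreover have "inj_on f (S (L x))" using Hk_bij[OF assms(1,4)] by (simp add: bij_betw_def)
  ultimately show ?thesis using assms(6) inj_on_def by metis
qed

lemma Hk_surj: assumes "H k" "j \<le> k" "A \<subseteq> {1..D}" "card A = j" shows "\<exists>x\<in>V. L x = j \<and> f x = A"
proof -
  have "A \<in> tgt j" unfolding tgt_def using assms by simp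
  hence "A \<in> f ` S j" using Hk_bij[OF assms(1,2)] by (simp add: bij_betw_def)
  thus ?thesis unfolding S_def by auto
qed

lemma Hk_S: assumes "H k" "j \<le> k" shows "finite (S j)" "card (S j) = D choose j"
proof -
  have b: "bij_betw f (S j) (tgt j)" by (rule Hk_bij[OF assms])
  show "finite (S j)" using bij_betw_finite[OF b] fin_tgt by simp
  show "card (S j) = D choose j" using bij_betw_same_card[OF b] card_tgt by simp
qed

lemma Hk_adj: assumes H: "H k" and x: "x \<in> V" "L x \<le> k" and y: "y \<in> V" "L y \<le> k"
  shows "E x y \<longleftrightarrow> card (sd (f x) (f y)) = 1"
proof -
  have cx: "card (f x) = L x" by (rule Hk_card[OF H x])
  have cy: "card (f y) = L y" by (rule Hk_card[OF H y])
  have s: "card (sd (f x) (f y)) = 1 \<longleftrightarrow> (f x \<subseteq> f y \<and> L y = Suc (L x)) \<or> (f y \<subseteq> f x \<and> L x = Suc (L y))"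
    using sd_card1[OF fin_f fin_f, of x y] cx cy by simp
  consider "L y = Suc (L x)" | "L x = Suc (L y)" | "L y \<noteq> Suc (L x)" "L x \<noteq> Suc (L y)" by blast
  thus ?thesis
  proof cases
    case 1
    have "E x y \<longleftrightarrow> f x \<subseteq> f y" using Hk_adjc[OF H x(1) y(1) 1[symmetric] y(2)] .
    thus ?thesis using s 1 by auto
  next
    case 2
    have "E y x \<longleftrightarrow> f y \<subseteq> f x" using Hk_adjc[OF H y(1) x(1) 2[symmetric] x(2)] .
    thus ?thesis using s 2 Esym by auto
  next
    case 3
    thus ?thesis using s L_adj[of x y] by auto
  qed
qed

lemma cc_low: assumes H: "H k" and v: "v \<in> V" "L v < k" and u: "u \<in> V" "L u < k" "u \<noteq> v"
  shows "cc v u \<le> 2"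
proof -
  let ?Y = "{y\<in>V. E v y \<and> E y u}"
  have Yk: "\<And>y. y \<in> ?Y \<Longrightarrow> L y \<le> k" using L_adj v(2) by fastforce
  have inj: "inj_on f ?Y"
    unfolding inj_on_def using Hk_inj[OF H] Yk by blast
  have fv: "f v \<noteq> f u" using Hk_inj[OF H v(1) u(1)] v(2) u(2,3) by fastforce
  have sub: "f ` ?Y \<subseteq> (\<lambda>a. sd (f v) {a}) ` (sd (f v) (f u))"
  proof
    fix Z assume "Z \<in> f ` ?Y"
    then obtain y where y: "y \<in> ?Y" "Z = f y" by blast
    have "card (sd (f v) (f y)) = 1" using Hk_adj[OF H v(1) _ _ Yk[OF y(1)]] y(1) v(2) by auto
    moreover have "card (sd (f y) (f u)) = 1" using Hk_adj[OF H _ Yk[OF y(1)] u(1)] y(1) u(2) by auto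
    ultimately show "Z \<in> (\<lambda>a. sd (f v) {a}) ` (sd (f v) (f u))" using sd_two(1)[OF _ _ fv] y(2) by blast
  qed
  show ?thesis
  proof (cases "?Y = {}")
    case True
    have "cc v u = 0" unfolding cc_def using True by (simp only: card.empty)
    thus ?thesis by simp
  next
    case False
    then obtain y where y: "y \<in> ?Y" by blast
    have "card (sd (f v) (f y)) = 1" using Hk_adj[OF H v(1) _ _ Yk[OF y]] y v(2) by auto
    moreover have "card (sd (f y) (f u)) = 1" using Hk_adj[OF H _ Yk[OF y] u(1)] y u(2) by auto
    ultimately have st: "finite (sd (f v) (f u))" "card (sd (f v) (f u)) \<le> 2"
      using sd_two(2,3)[OF _ _ fv] by blast+
    have "cc v u = card (f ` ?Y)" unfolding cc_def using card_image[OF inj] by simp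
    also have "\<dots> \<le> card ((\<lambda>a. sd (f v) {a}) ` (sd (f v) (f u)))"
      by (rule card_mono[OF finite_imageI[OF st(1)] sub])
    also have "\<dots> \<le> card (sd (f v) (f u))" by (rule card_image_le[OF st(1)])
    finally show ?thesis using st(2) by simp
  qed
qed

context
  fixes k :: nat
  assumes Hk: "H k" and k1: "1 \<le> k" and kD: "k < D"
begin

lemma Sk_fin: "finite (S k)" "card (S k) = D choose k" using Hk_S[OF Hk] by auto
lemma Skm_fin: "finite (S (k - 1))" "card (S (k - 1)) = D choose (k - 1)" using Hk_S[OF Hk] by auto

lemma S_iff: "x \<in> S j \<longleftrightarrow> x \<in> V \<and> L x = j" unfolding S_def by simp

lemma Sk1_sub: "S (Suc k) \<subseteq> (\<Union>z\<in>S k. up z)"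
proof
  fix w assume w: "w \<in> S (Suc k)"
  hence "card (down w) = Suc k" using card_down S_iff by auto
  then obtain z where z: "z \<in> down w" by (metis card.empty ex_in_conv nat.distinct(1))
  hence "z \<in> S k" "w \<in> up z" using down_L[OF z] w unfolding S_iff up_def by auto
  thus "w \<in> (\<Union>z\<in>S k. up z)" by blast
qed

lemma Sk1_fin: "finite (S (Suc k))"
  using finite_subset[OF Sk1_sub] Sk_fin(1) fin_up S_iff by blast

lemma up_Sk: assumes z: "z \<in> S k" shows "{w\<in>S (Suc k). E z w} = up z"
proof (rule set_eqI)
  fix w show "w \<in> {w\<in>S (Suc k). E z w} \<longleftrightarrow> w \<in> up z"
    using L_adj[of z w] z unfolding S_def up_def by auto
qed

lemma down_Sk1: assumes w: "w \<in> S (Suc k)" shows "{z\<in>S k. E z w} = down w"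
proof (rule set_eqI)
  fix z show "z \<in> {z\<in>S k. E z w} \<longleftrightarrow> z \<in> down w"
    using L_adj[of z w] w unfolding S_def down_def by auto
qed

lemma Sk1_card: "card (S (Suc k)) = D choose (Suc k)"
proof -
  have "(\<Sum>z\<in>S k. card {w\<in>S (Suc k). E z w}) = (\<Sum>w\<in>S (Suc k). card {z\<in>S k. E z w})"
    by (rule sum_card_swap[OF Sk_fin(1) Sk1_fin])
  moreover have "(\<Sum>z\<in>S k. card {w\<in>S (Suc k). E z w}) = (\<Sum>z\<in>S k. D - k)"
  proof (rule sum.cong)
    fix z assume z: "z \<in> S k"
    show "card {w\<in>S (Suc k). E z w} = D - k" unfolding up_Sk[OF z] using card_up z S_iff by simp
  qed simp
  moreover have "(\<Sum>w\<in>S (Suc k). card {z\<in>S k. E z w}) = (\<Sum>w\<in>S (Suc k). Suc k)"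
  proof (rule sum.cong)
    fix w assume w: "w \<in> S (Suc k)"
    show "card {z\<in>S k. E z w} = Suc k" unfolding down_Sk1[OF w] using card_down w S_iff by simp
  qed simp
  ultimately have "card (S k) * (D - k) = card (S (Suc k)) * Suc k" by simp
  hence "(D choose Suc k) * Suc k = card (S (Suc k)) * Suc k" using Sk_fin(2) binom_step[of D k] by simp
  thus ?thesis unfolding mult_cancel2 by simp
qed

definition T where "T v = {w\<in>S (Suc k). \<exists>z. E v z \<and> E z w}"

lemma T_bound: assumes v: "v \<in> S (k - 1)" shows "2 * card (T v) \<le> Suc (D - k) * (D - k)"
proof -
  have vV: "v \<in> V" and Lv: "L v = k - 1" using v S_iff by auto
  let ?K = "{u\<in>N2 v. L u < k}"
  have TN: "T v = {u\<in>N2 v. L u = Suc k}"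
    unfolding T_def N2_def S_def using Lv k1 by auto
  have split: "N2 v = ?K \<union> T v"
  proof -
    have "\<And>u. u \<in> N2 v \<Longrightarrow> L u < k \<or> L u = Suc k" using N2_L Lv k1 by fastforce
    thus ?thesis unfolding TN by auto
  qed
  have dj: "?K \<inter> T v = {}" unfolding TN by auto
  have finK: "finite ?K" using fin_N2[OF vV] by simp
  have finT: "finite (T v)" unfolding TN using fin_N2[OF vV] by simp
  have cardN: "card (N2 v) = card ?K + card (T v)"
    using card_Un_disjoint[OF finK finT dj] split by simp
  have sumN: "(\<Sum>u\<in>N2 v. cc v u) = (\<Sum>u\<in>?K. cc v u) + (\<Sum>u\<in>T v. cc v u)"
    using sum.union_disjoint[OF finK finT dj] split by simp
  have sK: "(\<Sum>u\<in>?K. cc v u) \<le> (\<Sum>u\<in>?K. 2)"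
  proof (rule sum_mono)
    fix u assume u: "u \<in> ?K"
    hence "u \<in> V" "u \<noteq> v" unfolding N2_def by auto
    thus "cc v u \<le> 2" using cc_low[OF Hk vV _ _] u Lv k1 by auto
  qed
  have sT: "(\<Sum>u\<in>T v. cc v u) = Suc (D - k) * (D - k)"
  proof -
    have "(\<Sum>u\<in>T v. cc v u) = (\<Sum>u\<in>T v. card {y\<in>up v. E y u})"
    proof (rule sum.cong)
      fix u assume u: "u \<in> T v"
      hence Lu: "L u = Suc k" unfolding T_def S_def by auto
      have "{y\<in>V. E v y \<and> E y u} = {y\<in>up v. E y u}"
      proof (rule set_eqI)
        fix y show "y \<in> {y\<in>V. E v y \<and> E y u} \<longleftrightarrow> y \<in> {y\<in>up v. E y u}"
          unfolding up_def using L_adj[of v y] L_adj[of y u] Lv Lu k1 by auto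
      qed
      thus "cc v u = card {y\<in>up v. E y u}" unfolding cc_def by simp
    qed simp
    also have "\<dots> = (\<Sum>y\<in>up v. card {u\<in>T v. E y u})"
      by (rule sum_card_swap[OF finT fin_up[OF vV]])
    also have "\<dots> = (\<Sum>y\<in>up v. D - k)"
    proof (rule sum.cong)
      fix y assume y: "y \<in> up v"
      hence Ly: "L y = k" "y \<in> V" "E v y" using up_L Lv k1 by auto
      have "{u\<in>T v. E y u} = up y"
      proof (rule set_eqI)
        fix u show "u \<in> {u\<in>T v. E y u} \<longleftrightarrow> u \<in> up y"
          unfolding T_def up_def S_def using Ly L_adj[of y u] by auto
      qed
      thus "card {u\<in>T v. E y u} = D - k" using card_up Ly by simp
    qed simp
    also have "\<dots> = Suc (D - k) * (D - k)"
    proof -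
      have "D - (k - 1) = Suc (D - k)" using k1 kD by linarith
      thus ?thesis using card_up[OF vV] Lv by simp
    qed
    finally show ?thesis .
  qed
  have ssp': "card (N2 v) \<le> D choose 2" using ssp vV sphere2 unfolding SSP_def by auto
  hence "2 * card (N2 v) \<le> 2 * (D * (D - 1) div 2)" unfolding choose_two by simp
  also have "\<dots> \<le> D * (D - 1)" by (rule times_div_less_eq_dividend)
  finally have "2 * card (N2 v) \<le> D * (D - 1)" .
  thus ?thesis using sum_cc[OF vV] sumN sK sT cardN by simp
qed

definition Sh where "Sh w = {v\<in>S (k - 1). \<exists>z. E v z \<and> E z w}"
definition cw where "cw w v = card {z\<in>down w. E v z}"
definition P where "P w = {p \<in> down w \<times> down w. fst p \<noteq> snd p}"

lemma Sh_fin: "finite (Sh w)" unfolding Sh_def using Skm_fin(1) by simp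

lemma down_k: "w \<in> S (Suc k) \<Longrightarrow> z \<in> down w \<Longrightarrow> z \<in> V \<and> L z = k \<and> E z w"
  using down_L S_iff by fastforce

lemma downz_Sh: assumes w: "w \<in> S (Suc k)" and z: "z \<in> down w"
  shows "{v\<in>Sh w. E v z} = down z"
proof (rule set_eqI)
  fix v
  have zz: "z \<in> V" "L z = k" "E z w" using down_k[OF w z] by auto
  show "v \<in> {v\<in>Sh w. E v z} \<longleftrightarrow> v \<in> down z"
    unfolding Sh_def down_def S_def using L_adj[of v z] zz k1 by auto
qed

lemma sum_cw: assumes w: "w \<in> S (Suc k)" shows "(\<Sum>v\<in>Sh w. cw w v) = Suc k * k"
proof -
  have wV: "w \<in> V" "L w = Suc k" using w S_iff by auto
  have "(\<Sum>v\<in>Sh w. cw w v) = (\<Sum>z\<in>down w. card {v\<in>Sh w. E v z})"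
    unfolding cw_def by (rule sum_card_swap[OF Sh_fin fin_down[OF wV(1)]])
  also have "\<dots> = (\<Sum>z\<in>down w. k)"
  proof (rule sum.cong)
    fix z assume z: "z \<in> down w"
    show "card {v\<in>Sh w. E v z} = k" unfolding downz_Sh[OF w z] using card_down down_k[OF w z] by simp
  qed simp
  also have "\<dots> = Suc k * k" using card_down[OF wV(1)] wV(2) by simp
  finally show ?thesis .
qed

lemma inter_lt: assumes z: "z \<in> V" "L z = k" and z': "z' \<in> V" "L z' = k" and ne: "z \<noteq> z'"
  shows "card (f z \<inter> f z') < k"
proof -
  have c: "card (f z) = k" "card (f z') = k" using Hk_card[OF Hk] z z' by auto
  have "f z \<noteq> f z'" using Hk_inj[OF Hk z(1) z'(1)] z z' ne by auto
  hence "f z \<inter> f z' \<noteq> f z" using c card_subset_eq[OF fin_f, of "f z" z'] by auto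
  hence "f z \<inter> f z' \<subset> f z" by auto
  from psubset_card_mono[OF fin_f this] show ?thesis using c by simp
qed

lemma common_le1: assumes z: "z \<in> V" "L z = k" and z': "z' \<in> V" "L z' = k" and ne: "z \<noteq> z'"
  shows "card {v\<in>Sh w. E v z \<and> E v z'} \<le> 1"
proof -
  have fv: "\<And>v. v \<in> Sh w \<Longrightarrow> E v z \<Longrightarrow> E v z' \<Longrightarrow> f v = f z \<inter> f z'"
  proof -
    fix v assume v: "v \<in> Sh w" "E v z" "E v z'"
    have vV: "v \<in> V" "L v = k - 1" using v(1) unfolding Sh_def S_def by auto
    have "Suc (L v) = k" using vV k1 by simp
    hence "f v \<subseteq> f z" "f v \<subseteq> f z'"
      using Hk_adjc[OF Hk vV(1) z(1)] Hk_adjc[OF Hk vV(1) z'(1)] v z z' by auto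
    hence sub: "f v \<subseteq> f z \<inter> f z'" by simp
    have "card (f v) = k - 1" using Hk_card[OF Hk vV(1)] vV by simp
    moreover have "card (f z \<inter> f z') \<le> k - 1" using inter_lt[OF z z' ne] by simp
    moreover have fi: "finite (f z \<inter> f z')" using fin_f by simp
    moreover have "card (f v) \<le> card (f z \<inter> f z')" by (rule card_mono[OF fi sub])
    ultimately have "card (f v) = card (f z \<inter> f z')" by simp
    thus "f v = f z \<inter> f z'" by (rule card_subset_eq[OF fi sub])
  qed
  have "\<forall>a\<in>{v\<in>Sh w. E v z \<and> E v z'}. \<forall>b\<in>{v\<in>Sh w. E v z \<and> E v z'}. a = b"
  proof (intro ballI)
    fix a b assume a: "a \<in> {v\<in>Sh w. E v z \<and> E v z'}" and b: "b \<in> {v\<in>Sh w. E v z \<and> E v z'}"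
    have "f a = f b" using fv a b by auto
    moreover have "a \<in> V" "b \<in> V" "L a \<le> k" "L b \<le> k" using a b unfolding Sh_def S_def by auto
    ultimately show "a = b" using Hk_inj[OF Hk, of a b] by simp
  qed
  thus ?thesis using card_le_Suc0_iff_eq[of "{v\<in>Sh w. E v z \<and> E v z'}"] Sh_fin by simp
qed

lemma sum_cw2: assumes w: "w \<in> S (Suc k)"
  shows "(\<Sum>v\<in>Sh w. cw w v * (cw w v - 1)) = (\<Sum>p\<in>P w. card {v\<in>Sh w. E v (fst p) \<and> E v (snd p)})"
proof -
  have wV: "w \<in> V" using w S_iff by auto
  have finP: "finite (P w)" unfolding P_def using fin_down[OF wV] by simp
  have "(\<Sum>v\<in>Sh w. cw w v * (cw w v - 1)) = (\<Sum>v\<in>Sh w. card {p\<in>P w. E v (fst p) \<and> E v (snd p)})"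
  proof (rule sum.cong)
    fix v assume v: "v \<in> Sh w"
    let ?C = "{z\<in>down w. E v z}"
    have eqs: "{p\<in>P w. E v (fst p) \<and> E v (snd p)} = {p \<in> ?C \<times> ?C. fst p \<noteq> snd p}"
      unfolding P_def by auto
    have fC: "finite ?C" using fin_down[OF wV] by simp
    show "cw w v * (cw w v - 1) = card {p\<in>P w. E v (fst p) \<and> E v (snd p)}"
      unfolding cw_def eqs card_offdiag[OF fC] ..
  qed simp
  also have "\<dots> = (\<Sum>p\<in>P w. card {v\<in>Sh w. E v (fst p) \<and> E v (snd p)})"
    by (rule sum_card_swap[OF Sh_fin finP])
  finally show ?thesis .
qed

lemma card_P: assumes w: "w \<in> S (Suc k)" shows "card (P w) = Suc k * k"
proof -
  have wV: "w \<in> V" "L w = Suc k" using w S_iff by auto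
  show ?thesis unfolding P_def using card_offdiag[OF fin_down[OF wV(1)]] card_down[OF wV(1)] wV(2) by simp
qed

lemma P_le1: assumes w: "w \<in> S (Suc k)" and p: "p \<in> P w"
  shows "card {v\<in>Sh w. E v (fst p) \<and> E v (snd p)} \<le> 1"
proof -
  have "fst p \<in> down w" "snd p \<in> down w" "fst p \<noteq> snd p" using p unfolding P_def by auto
  thus ?thesis using common_le1[of "fst p" "snd p"] down_k[OF w, of "fst p"] down_k[OF w, of "snd p"] by simp
qed

lemma sum_cw2_le: assumes w: "w \<in> S (Suc k)"
  shows "(\<Sum>v\<in>Sh w. cw w v * (cw w v - 1)) \<le> Suc k * k"
proof -
  have "(\<Sum>p\<in>P w. card {v\<in>Sh w. E v (fst p) \<and> E v (snd p)}) \<le> (\<Sum>p\<in>P w. 1)"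
    by (rule sum_mono) (rule P_le1[OF w])
  thus ?thesis unfolding sum_cw2[OF w] using card_P[OF w] by simp
qed

lemma ineq_sum: assumes w: "w \<in> S (Suc k)"
  shows "2 * (\<Sum>v\<in>Sh w. cw w v) \<le> (\<Sum>v\<in>Sh w. cw w v * (cw w v - 1)) + 2 * card (Sh w)"
proof -
  have "(\<Sum>v\<in>Sh w. 2 * cw w v) \<le> (\<Sum>v\<in>Sh w. cw w v * (cw w v - 1) + 2)"
    by (rule sum_mono) (rule cc_ineq)
  moreover have "(\<Sum>v\<in>Sh w. cw w v * (cw w v - 1) + 2) = (\<Sum>v\<in>Sh w. cw w v * (cw w v - 1)) + (\<Sum>v\<in>Sh w. 2)"
    by (rule sum.distrib)
  moreover have "(\<Sum>v\<in>Sh w. (2::nat)) = 2 * card (Sh w)" by simp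
  moreover have "(\<Sum>v\<in>Sh w. 2 * cw w v) = 2 * (\<Sum>v\<in>Sh w. cw w v)" by (rule sum_distrib_left[symmetric])
  ultimately show ?thesis by linarith
qed

lemma Sh_lower: assumes w: "w \<in> S (Suc k)" shows "Suc k * k \<le> 2 * card (Sh w)"
  using ineq_sum[OF w] sum_cw[OF w] sum_cw2_le[OF w] by linarith

lemma Sh_eq: assumes w: "w \<in> S (Suc k)" shows "2 * card (Sh w) = Suc k * k"
proof -
  have swap: "(\<Sum>w\<in>S (Suc k). card (Sh w)) = (\<Sum>v\<in>S (k - 1). card (T v))"
    unfolding Sh_def T_def by (rule sum_card_swap[OF Sk1_fin Skm_fin(1)])
  have "(\<Sum>v\<in>S (k - 1). 2 * card (T v)) \<le> (\<Sum>v\<in>S (k - 1). Suc (D - k) * (D - k))"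
    by (rule sum_mono) (rule T_bound)
  also have "\<dots> = (D choose (k - 1)) * (Suc (D - k) * (D - k))" using Skm_fin(2) by simp
  also have "\<dots> = (D choose Suc k) * (Suc k * k)"
  proof -
    have a: "D - (k - 1) = Suc (D - k)" using k1 kD by linarith
    have b: "Suc (k - 1) = k" using k1 by simp
    have 1: "(D choose (k - 1)) * Suc (D - k) = (D choose k) * k"
      using binom_step[of D "k - 1"] unfolding a b .
    have 2: "(D choose k) * (D - k) = (D choose Suc k) * Suc k" by (rule binom_step)
    have "(D choose (k - 1)) * (Suc (D - k) * (D - k)) = ((D choose (k - 1)) * Suc (D - k)) * (D - k)"
      by (simp only: mult.assoc)
    also have "\<dots> = ((D choose k) * (D - k)) * k" unfolding 1 by (simp only: mult_ac)
    also have "\<dots> = (D choose Suc k) * (Suc k * k)" unfolding 2 by (simp only: mult.assoc)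
    finally show ?thesis .
  qed
  finally have "(\<Sum>v\<in>S (k - 1). 2 * card (T v)) \<le> card (S (Suc k)) * (Suc k * k)" using Sk1_card by simp
  hence "(\<Sum>w\<in>S (Suc k). 2 * card (Sh w)) \<le> card (S (Suc k)) * (Suc k * k)"
    using swap by (simp add: sum_distrib_left[symmetric])
  moreover have "\<forall>w\<in>S (Suc k). Suc k * k \<le> 2 * card (Sh w)" using Sh_lower by blast
  ultimately have "\<forall>w\<in>S (Suc k). 2 * card (Sh w) = Suc k * k"
    using sum_eq_bound[OF Sk1_fin, of "Suc k * k" "\<lambda>w. 2 * card (Sh w)"] by simp
  thus ?thesis using w by blast
qed

lemma X_eq: assumes w: "w \<in> S (Suc k)" shows "(\<Sum>v\<in>Sh w. cw w v * (cw w v - 1)) = Suc k * k"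
  using ineq_sum[OF w] sum_cw[OF w] sum_cw2_le[OF w] Sh_eq[OF w] by linarith

lemma P_eq1: assumes w: "w \<in> S (Suc k)" and p: "p \<in> P w"
  shows "card {v\<in>Sh w. E v (fst p) \<and> E v (snd p)} = 1"
proof -
  have wV: "w \<in> V" using w S_iff by auto
  have finP: "finite (P w)" unfolding P_def using fin_down[OF wV] by simp
  have "\<forall>p\<in>P w. card {v\<in>Sh w. E v (fst p) \<and> E v (snd p)} = 1"
  proof (rule sum_eq_bound_le[OF finP])
    show "\<forall>p\<in>P w. card {v\<in>Sh w. E v (fst p) \<and> E v (snd p)} \<le> 1" using P_le1[OF w] by blast
    show "card (P w) * 1 \<le> (\<Sum>p\<in>P w. card {v\<in>Sh w. E v (fst p) \<and> E v (snd p)})"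
      using sum_cw2[OF w] X_eq[OF w] card_P[OF w] by simp
  qed
  thus ?thesis using p by blast
qed

lemma cw_le2: assumes w: "w \<in> S (Suc k)" and v: "v \<in> Sh w" shows "cw w v \<le> 2"
proof -
  have "\<forall>v\<in>Sh w. cw w v * (cw w v - 1) + 2 = 2 * cw w v"
  proof (rule sum_eq_ge[OF Sh_fin])
    show "\<forall>v\<in>Sh w. 2 * cw w v \<le> cw w v * (cw w v - 1) + 2" using cc_ineq by blast
    have "(\<Sum>v\<in>Sh w. cw w v * (cw w v - 1) + 2) = (\<Sum>v\<in>Sh w. cw w v * (cw w v - 1)) + (\<Sum>v\<in>Sh w. 2)"
      by (rule sum.distrib)
    moreover have "(\<Sum>v\<in>Sh w. (2::nat)) = 2 * card (Sh w)" by simp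
    moreover have "(\<Sum>v\<in>Sh w. 2 * cw w v) = 2 * (\<Sum>v\<in>Sh w. cw w v)" by (rule sum_distrib_left[symmetric])
    ultimately show "(\<Sum>v\<in>Sh w. cw w v * (cw w v - 1) + 2) \<le> (\<Sum>v\<in>Sh w. 2 * cw w v)"
      using X_eq[OF w] Sh_eq[OF w] sum_cw[OF w] by linarith
  qed
  hence "2 * cw w v = cw w v * (cw w v - 1) + 2" using v by simp
  thus ?thesis by (rule cc_ineq_eq)
qed

lemma inter_k1: assumes w: "w \<in> S (Suc k)" and z: "z \<in> down w" and z': "z' \<in> down w" and ne: "z \<noteq> z'"
  shows "card (f z \<inter> f z') = k - 1"
proof -
  have zz: "z \<in> V" "L z = k" "z' \<in> V" "L z' = k" using down_k[OF w z] down_k[OF w z'] by auto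
  have "(z, z') \<in> P w" unfolding P_def using z z' ne by simp
  hence "card {v\<in>Sh w. E v z \<and> E v z'} = 1" using P_eq1[OF w] by fastforce
  then obtain v where v: "v \<in> Sh w" "E v z" "E v z'" by (metis (no_types, lifting) One_nat_def card_1_singletonE insertI1 mem_Collect_eq)
  have vV: "v \<in> V" "L v = k - 1" using v(1) unfolding Sh_def S_def by auto
  have "Suc (L v) = k" using vV k1 by simp
  hence "f v \<subseteq> f z" "f v \<subseteq> f z'"
    using Hk_adjc[OF Hk vV(1) zz(1)] Hk_adjc[OF Hk vV(1) zz(3)] v zz by auto
  hence sub: "f v \<subseteq> f z \<inter> f z'" by simp
  have "card (f v) = k - 1" using Hk_card[OF Hk vV(1)] vV by simp
  moreover have "card (f v) \<le> card (f z \<inter> f z')" by (rule card_mono[OF _ sub]) (simp add: fin_f)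
  moreover have "card (f z \<inter> f z') < k" by (rule inter_lt) (use zz ne in auto)
  ultimately show ?thesis by linarith
qed

lemma fw_struct: assumes w: "w \<in> S (Suc k)"
  shows "card (f w) = Suc k" "f ` down w = {A. A \<subseteq> f w \<and> card A = k}"
proof -
  have wV: "w \<in> V" "L w = Suc k" using w S_iff by auto
  have cdw: "card (down w) = Suc k" using card_down wV by simp
  have fdw: "finite (down w)" by (rule fin_down[OF wV(1)])
  have "\<not> (\<forall>a\<in>down w. \<forall>b\<in>down w. a = b)"
  proof
    assume "\<forall>a\<in>down w. \<forall>b\<in>down w. a = b"
    hence "card (down w) \<le> Suc 0" using card_le_Suc0_iff_eq[OF fdw] by blast
    thus False using cdw k1 by simp
  qed
  then obtain z1 z2 where z12: "z1 \<in> down w" "z2 \<in> down w" "z1 \<noteq> z2" by blast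
  define U where "U = f z1 \<union> f z2"
  have z12k: "L z1 = k" "L z2 = k" "z1 \<in> V" "z2 \<in> V" using down_k[OF w] z12 by auto
  have cz: "\<And>z. z \<in> down w \<Longrightarrow> card (f z) = k" using Hk_card[OF Hk] down_k[OF w] by fastforce
  have finU: "finite U" unfolding U_def using fin_f by simp
  have cU: "card U = Suc k"
  proof -
    have "card (f z1) + card (f z2) = card U + card (f z1 \<inter> f z2)"
      unfolding U_def by (rule card_Un_Int[OF fin_f fin_f])
    thus ?thesis using cz[OF z12(1)] cz[OF z12(2)] inter_k1[OF w z12] k1 by simp
  qed
  have allsub: "\<forall>z\<in>down w. f z \<subseteq> U"
  proof (rule ccontr)
    assume "\<not> (\<forall>z\<in>down w. f z \<subseteq> U)"
    then obtain z a where z: "z \<in> down w" and a: "a \<in> f z" "a \<notin> U" by blast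
    have zk: "z \<in> V" "L z = k" using down_k[OF w z] by auto
    have n1: "z \<noteq> z1" using a unfolding U_def by auto
    have n2: "z \<noteq> z2" using a unfolding U_def by auto
    let ?Y = "f z \<inter> U"
    have finY: "finite ?Y" using finU by simp
    have "?Y \<subseteq> f z - {a}" using a by auto
    hence "card ?Y \<le> card (f z - {a})" by (rule card_mono[OF finite_Diff[OF fin_f]])
    also have "\<dots> = k - 1" using card_Diff_singleton[OF a(1)] cz[OF z] by simp
    finally have cY: "card ?Y \<le> k - 1" .
    have X1: "f z \<inter> f z1 = ?Y"
    proof (rule card_subset_eq[OF finY])
      show s: "f z \<inter> f z1 \<subseteq> ?Y" unfolding U_def by auto
      have "card (f z \<inter> f z1) = k - 1" by (rule inter_k1[OF w z z12(1) n1])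
      moreover have "card (f z \<inter> f z1) \<le> card ?Y" by (rule card_mono[OF finY s])
      ultimately show "card (f z \<inter> f z1) = card ?Y" using cY by simp
    qed
    have X2: "f z \<inter> f z2 = ?Y"
    proof (rule card_subset_eq[OF finY])
      show s: "f z \<inter> f z2 \<subseteq> ?Y" unfolding U_def by auto
      have "card (f z \<inter> f z2) = k - 1" by (rule inter_k1[OF w z z12(2) n2])
      moreover have "card (f z \<inter> f z2) \<le> card ?Y" by (rule card_mono[OF finY s])
      ultimately show "card (f z \<inter> f z2) = card ?Y" using cY by simp
    qed
    let ?C = "f z1 \<inter> f z2"
    have finC: "finite ?C" using fin_f by simp
    have YC: "?Y \<subseteq> ?C" using X1 X2 by blast
    have cC: "card ?C = k - 1" by (rule inter_k1[OF w z12])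
    have cY2: "card ?Y = k - 1" using X1 inter_k1[OF w z z12(1) n1] by simp
    have YeqC: "?Y = ?C" by (rule card_subset_eq[OF finC YC]) (simp add: cC cY2)
    have Csub: "?C \<subseteq> {1..D}" using f_sub by auto
    obtain v where v: "v \<in> V" "L v = k - 1" "f v = ?C"
      using Hk_surj[OF Hk _ Csub cC] by auto
    have Lv: "Suc (L v) = k" using v k1 by simp
    have Ez: "E v z" using Hk_adjc[OF Hk v(1) zk(1)] Lv zk v(3) YeqC by auto
    have Ez1: "E v z1" using Hk_adjc[OF Hk v(1) z12k(3)] Lv z12k v(3) by auto
    have Ez2: "E v z2" using Hk_adjc[OF Hk v(1) z12k(4)] Lv z12k v(3) by auto
    have vSh: "v \<in> Sh w" unfolding Sh_def S_def using v Ez down_k[OF w z] by auto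
    have "{z, z1, z2} \<subseteq> {y\<in>down w. E v y}" using z z12 Ez Ez1 Ez2 by auto
    hence "card {z, z1, z2} \<le> cw w v" unfolding cw_def by (rule card_mono[rotated]) (simp add: fdw)
    moreover have "card {z, z1, z2} = 3" using n1 n2 z12(3) by simp
    ultimately show False using cw_le2[OF w vSh] by simp
  qed
  have inj: "inj_on f (down w)"
  proof (rule inj_onI)
    fix x y assume "x \<in> down w" "y \<in> down w" "f x = f y"
    thus "x = y" using Hk_inj[OF Hk, of x y] down_k[OF w] by auto
  qed
  have img_sub: "f ` down w \<subseteq> {A. A \<subseteq> U \<and> card A = k}" using allsub cz by auto
  have img: "f ` down w = {A. A \<subseteq> U \<and> card A = k}"
  proof (rule card_subset_eq[OF _ img_sub])
    show "finite {A. A \<subseteq> U \<and> card A = k}" using finU by simp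
    have "card {A. A \<subseteq> U \<and> card A = k} = Suc k" using n_subsets[OF finU, of k] cU by simp
    thus "card (f ` down w) = card {A. A \<subseteq> U \<and> card A = k}" using card_image[OF inj] cdw by simp
  qed
  have fwU: "f w = U"
  proof -
    have "2 \<le> L w" using wV k1 by simp
    hence "f w = \<Union> (f ` down w)" using f_U[OF wV(1)] by simp
    moreover have "\<Union> (f ` down w) \<subseteq> U" using allsub by auto
    moreover have "U \<subseteq> \<Union> (f ` down w)" unfolding U_def using z12 by auto
    ultimately show ?thesis by simp
  qed
  show "card (f w) = Suc k" using fwU cU by simp
  show "f ` down w = {A. A \<subseteq> f w \<and> card A = k}" using img fwU by simp
qed

lemma adj_new: assumes z: "z \<in> V" "L z = k" and w: "w \<in> S (Suc k)"
  shows "E z w \<longleftrightarrow> f z \<subseteq> f w"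
proof
  assume "E z w"
  hence "z \<in> down w" unfolding down_def using z w S_iff by auto
  thus "f z \<subseteq> f w" using f_mono w S_iff by auto
next
  assume s: "f z \<subseteq> f w"
  have "card (f z) = k" using Hk_card[OF Hk z(1)] z by simp
  hence "f z \<in> f ` down w" using fw_struct(2)[OF w] s by simp
  then obtain z' where z': "z' \<in> down w" "f z = f z'" by auto
  have "z = z'" using Hk_inj[OF Hk z(1), of z'] down_k[OF w z'(1)] z z'(2) by simp
  thus "E z w" using down_k[OF w z'(1)] by simp
qed

lemma cc_le2_all: assumes v: "v \<in> S (k - 1)" shows "\<forall>u\<in>N2 v. cc v u \<le> 2"
proof
  fix u assume u: "u \<in> N2 v"
  have vV: "v \<in> V" "L v = k - 1" using v S_iff by auto
  have uV: "u \<in> V" "u \<noteq> v" using u unfolding N2_def by auto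
  have "L u < k \<or> L u = Suc k" using N2_L[OF u] vV k1 by auto
  thus "cc v u \<le> 2"
  proof
    assume "L u < k"
    thus ?thesis using cc_low[OF Hk vV(1) _ uV(1) _ uV(2)] vV k1 by simp
  next
    assume Lu: "L u = Suc k"
    hence uS: "u \<in> S (Suc k)" using uV S_iff by simp
    have vSh: "v \<in> Sh u" unfolding Sh_def using v u unfolding N2_def by auto
    have "{y\<in>V. E v y \<and> E y u} = {z\<in>down u. E v z}"
    proof (rule set_eqI)
      fix y show "y \<in> {y\<in>V. E v y \<and> E y u} \<longleftrightarrow> y \<in> {z\<in>down u. E v z}"
        unfolding down_def using L_adj[of v y] L_adj[of y u] vV Lu k1 by auto
    qed
    hence "cc v u = cw u v" unfolding cc_def cw_def by simp
    thus ?thesis using cw_le2[OF uS vSh] by simp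
  qed
qed

lemma two_elems: assumes "finite A" "2 \<le> card A" obtains a b where "a \<in> A" "b \<in> A" "a \<noteq> b"
proof -
  have "\<not> (\<forall>a\<in>A. \<forall>b\<in>A. a = b)"
  proof
    assume "\<forall>a\<in>A. \<forall>b\<in>A. a = b"
    hence "card A \<le> Suc 0" using card_le_Suc0_iff_eq[OF assms(1)] by blast
    thus False using assms(2) by simp
  qed
  thus ?thesis using that by blast
qed

lemma inj_new: "inj_on f (S (Suc k))"
proof (rule inj_onI, rule ccontr)
  fix w w' assume w: "w \<in> S (Suc k)" and w': "w' \<in> S (Suc k)" and eq: "f w = f w'" and ne: "w \<noteq> w'"
  let ?U = "f w"
  have cU: "card ?U = Suc k" by (rule fw_struct(1)[OF w])
  have c2': "2 \<le> card ?U" using cU k1 by simp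
  obtain a b where ab: "a \<in> ?U" "b \<in> ?U" "a \<noteq> b" by (rule two_elems[OF fin_f c2'])
  let ?A1 = "?U - {a}" and ?A2 = "?U - {b}" and ?C = "?U - {a} - {b}"
  have c1: "card ?A1 = k" using card_Diff_singleton[OF ab(1)] cU by simp
  have c2: "card ?A2 = k" using card_Diff_singleton[OF ab(2)] cU by simp
  have cC: "card ?C = k - 1" using card_Diff_singleton[of b ?A1] ab c1 by simp
  have sub: "?A1 \<subseteq> {1..D}" "?A2 \<subseteq> {1..D}" "?C \<subseteq> {1..D}" using f_sub[of w] by auto
  obtain z1 where z1: "z1 \<in> V" "L z1 = k" "f z1 = ?A1" using Hk_surj[OF Hk _ sub(1) c1] by auto
  obtain z2 where z2: "z2 \<in> V" "L z2 = k" "f z2 = ?A2" using Hk_surj[OF Hk _ sub(2) c2] by auto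
  obtain v where v: "v \<in> V" "L v = k - 1" "f v = ?C" using Hk_surj[OF Hk _ sub(3) cC] by auto
  have Lv: "Suc (L v) = k" using v k1 by simp
  have E1: "E z1 w" "E z1 w'" using adj_new[OF z1(1,2) w] adj_new[OF z1(1,2) w'] z1(3) eq by auto
  have E2: "E z2 w" "E z2 w'" using adj_new[OF z2(1,2) w] adj_new[OF z2(1,2) w'] z2(3) eq by auto
  have Ev1: "E v z1" using Hk_adjc[OF Hk v(1) z1(1)] Lv z1 v(3) by auto
  have Ev2: "E v z2" using Hk_adjc[OF Hk v(1) z2(1)] Lv z2 v(3) by auto
  have z12: "z1 \<noteq> z2" using z1(3) z2(3) ab by auto
  have vS: "v \<in> S (k - 1)" using v S_iff by simp
  have le1: "card {u\<in>N2 v. E z1 u \<and> E u z2} \<le> 1"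
    by (rule ncp'[OF v(1) cc_le2_all[OF vS] Ev1 Ev2 z12])
  have wV: "w \<in> V" "L w = Suc k" "w' \<in> V" "L w' = Suc k" using w w' S_iff by auto
  have nv: "w \<noteq> v" "w' \<noteq> v" using wV v(2) by auto
  have ex: "\<exists>y. E v y \<and> E y w" "\<exists>y. E v y \<and> E y w'" using Ev1 E1 by blast+
  have wN: "w \<in> N2 v" "w' \<in> N2 v" unfolding N2_def using wV nv ex by simp_all
  have "{w, w'} \<subseteq> {u\<in>N2 v. E z1 u \<and> E u z2}"
    using wN E1 Esym[OF E2(1)] Esym[OF E2(2)] by simp
  hence "card {w, w'} \<le> card {u\<in>N2 v. E z1 u \<and> E u z2}"
    by (rule card_mono[rotated]) (simp add: fin_N2[OF v(1)])
  thus False using le1 ne by simp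
qed

lemma H_step: "H (Suc k)"
proof -
  have bk1: "bij_betw f (S (Suc k)) (tgt (Suc k))"
  proof (rule bij_betw_imageI[OF inj_new])
    have isub: "f ` S (Suc k) \<subseteq> tgt (Suc k)" unfolding tgt_def using f_sub fw_struct(1) by auto
    show "f ` S (Suc k) = tgt (Suc k)"
    proof (rule card_subset_eq[OF fin_tgt isub])
      show "card (f ` S (Suc k)) = card (tgt (Suc k))"
        using card_image[OF inj_new] Sk1_card card_tgt by simp
    qed
  qed
  have "\<forall>j\<le>Suc k. bij_betw f (S j) (tgt j)"
  proof (intro allI impI)
    fix j assume "j \<le> Suc k"
    hence "j \<le> k \<or> j = Suc k" by auto
    thus "bij_betw f (S j) (tgt j)" using Hk_bij[OF Hk] bk1 by auto
  qed
  moreover have "\<forall>z\<in>V. \<forall>w\<in>V. Suc (L z) = L w \<longrightarrow> L w \<le> Suc k \<longrightarrow> (E z w \<longleftrightarrow> f z \<subseteq> f w)"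
  proof (intro ballI impI)
    fix z w assume z: "z \<in> V" and w: "w \<in> V" and l: "Suc (L z) = L w" "L w \<le> Suc k"
    show "E z w \<longleftrightarrow> f z \<subseteq> f w"
    proof (cases "L w \<le> k")
      case True thus ?thesis using Hk_adjc[OF Hk z w l(1)] by simp
    next
      case False
      hence "L w = Suc k" "L z = k" using l by auto
      thus ?thesis using adj_new[OF z] w S_iff by simp
    qed
  qed
  ultimately show ?thesis unfolding H_def by blast
qed

end


lemma H_all: "H D"
proof -
  have "\<forall>k. 1 \<le> k \<longrightarrow> k \<le> D \<longrightarrow> H k"
  proof
    fix k show "1 \<le> k \<longrightarrow> k \<le> D \<longrightarrow> H k"
    proof (induction k)
      case 0 show ?case by simp
    next
      case (Suc k)
      show ?case
      proof (cases "k = 0")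
        case True thus ?thesis using H1 by simp
      next
        case False
        show ?thesis
        proof (intro impI)
          assume "Suc k \<le> D"
          hence h: "1 \<le> k" "k < D" using False by auto
          hence "H k" using Suc.IH by simp
          thus "H (Suc k)" using H_step h by blast
        qed
      qed
    qed
  qed
  thus ?thesis using H0 by (cases "D = 0") auto
qed

lemma iso: "graph_iso V E (hcube_V D) hcube_E"
proof -
  have HD: "H D" by (rule H_all)
  have LD: "\<And>x. x \<in> V \<Longrightarrow> L x \<le> D" by (rule L_le_D)
  have inj: "inj_on f V"
  proof (rule inj_onI)
    fix x y assume "x \<in> V" "y \<in> V" "f x = f y"
    thus "x = y" using Hk_inj[OF HD, of x y] LD by simp
  qed
  have img: "f ` V = Pow {1..D}"
  proof
    show "f ` V \<subseteq> Pow {1..D}" using f_sub by auto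
    show "Pow {1..D} \<subseteq> f ` V"
    proof
      fix A assume "A \<in> Pow {1..D}"
      hence A: "A \<subseteq> {1..D}" by simp
      have "card A \<le> D" using card_mono[OF _ A] by simp
      then obtain x where "x \<in> V" "f x = A" using Hk_surj[OF HD _ A refl] by blast
      thus "A \<in> f ` V" by blast
    qed
  qed
  have bij: "bij_betw f V (hcube_V D)" unfolding hcube_V_def using inj img by (simp add: bij_betw_def)
  have adj: "\<forall>x\<in>V. \<forall>y\<in>V. E x y \<longleftrightarrow> hcube_E (f x) (f y)"
  proof (intro ballI)
    fix x y assume x: "x \<in> V" and y: "y \<in> V"
    show "E x y \<longleftrightarrow> hcube_E (f x) (f y)"
      using Hk_adj[OF HD x LD[OF x] y LD[OF y]] unfolding hcube_E_def sd_def .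
  qed
  show ?thesis unfolding graph_iso_def using bij adj by blast
qed

end

theorem corollary6:
  fixes V :: "'a set" and E :: "'a \<Rightarrow> 'a \<Rightarrow> bool" and D :: nat
  assumes "simple_graph V E"
    and "HSS V E D"
    and "\<forall>x \<in> V. SSP V E D x"
    and "\<forall>x \<in> V. NCP V E x"
  shows "graph_iso V E (hcube_V D) hcube_E"
proof -
  from assms(2) obtain x0 where x0: "x0 \<in> V" and reg: "regular V E D" and bip: "bipartite V E"
    and h: "\<forall>x\<in>V. enat (d_minus V E x0 x) = gdist V E x x0"
    unfolding HSS_def by blast
  have fin: "finite (nbrs V E x0)" and cn: "card (nbrs V E x0) = D" using reg x0 unfolding regular_def by auto
  obtain e where e: "bij_betw e {1 .. card (nbrs V E x0)} (nbrs V E x0)"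
    using ex_bij_betw_nat_finite_1[OF fin] by blast
  interpret hg2 V E D x0 e
    by unfold_locales (use assms x0 reg bip h e cn in auto)
  show ?thesis by (rule iso)
qed

end
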